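(* Let $\mathcal{S}=\{S_1,\dots,S_N\}\subseteq 2^{[n]}$ be a Sperner family and $h:\mathcal{S}\to 2^{[n]}$ a function with $H_i=h(S_i)\subseteq S_i$ for every $i\in[N]$. If the graph $G_{\mathcal{S},h}$ has a vertex of degree at most $1$, then there exists $S_0\in\mathcal{S}$ such that $\mathcal{Q}_{S_0,h(S_0)}\not\subseteq\bigcup_{S\in\mathcal{S}\setminus\{S_0\}}\mathcal{Q}_{S,h(S)}$.
   Context: $[n]=\{1,\dots,n\}$. A Sperner family is a family of sets none of which is contained in another. For $H\subseteq S\subseteq[n]$, $\mathcal{Q}_{S,H}=\{H\cup B: B\subseteq[n]\setminus S\}$. The graph $G_{\mathcal{S},h}$ has vertex set $\{(S_i,H_i): i\in[N]\}$, and two distinct vertices $(S_i,H_i)$, $(S_j,H_j)$ are adjacent if and only if $S_i\cap H_j=S_j\cap H_i$. *)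

theory Defs
  imports Main
begin

definition sperner :: "'a set set \<Rightarrow> bool" where
  "sperner F \<longleftrightarrow> (\<forall>A\<in>F. \<forall>B\<in>F. A \<subseteq> B \<longrightarrow> A = B)"

definition Q :: "nat \<Rightarrow> nat set \<Rightarrow> nat set \<Rightarrow> nat set set" where
  "Q n S H = {H \<union> B | B. B \<subseteq> {1..n} - S}"

text \<open>Adjacency in G_{S,h}: distinct vertices (S,h S), (T,h T) adjacent iff
  S \<inter> h T = T \<inter> h S. Vertices are indexed by the members of the family.\<close>
definition adj :: "(nat set \<Rightarrow> nat set) \<Rightarrow> nat set \<Rightarrow> nat set \<Rightarrow> bool" where
  "adj h S T \<longleftrightarrow> S \<noteq> T \<and> S \<inter> h T = T \<inter> h S"

definition degree :: "nat set set \<Rightarrow> (nat set \<Rightarrow> nat set) \<Rightarrow> nat set \<Rightarrow> nat" where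
  "degree F h S = card {T \<in> F. adj h S T}"

end

theory Submission
  imports Defs
begin

lemma Q_inter:
  assumes "H \<subseteq> T" "X \<in> Q n T H"
  shows "X \<inter> T = H"
  using assms unfolding Q_def by blast

theorem claim19:
  fixes n :: nat and F :: "nat set set" and h :: "nat set \<Rightarrow> nat set"
  assumes "F \<subseteq> Pow {1..n}"
    and "sperner F"
    and "\<And>S. S \<in> F \<Longrightarrow> h S \<subseteq> S"
    and "\<exists>S\<in>F. degree F h S \<le> 1"
  shows "\<exists>S0\<in>F. \<not> (Q n S0 (h S0) \<subseteq> (\<Union>S\<in>F - {S0}. Q n S (h S)))"
proof -
  obtain S0 where S0: "S0 \<in> F" "degree F h S0 \<le> 1" using assms(4) by blast
  have finF: "finite F" by (rule finite_subset[OF assms(1)]) simp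
  have fin: "finite {T \<in> F. adj h S0 T}" using finF by simp
  have uniq: "T1 = T2" if "T1 \<in> F" "adj h S0 T1" "T2 \<in> F" "adj h S0 T2" for T1 T2
  proof -
    have "card {T \<in> F. adj h S0 T} \<le> 1" using S0(2) unfolding degree_def .
    thus ?thesis using that card_le_Suc0_iff_eq[OF fin] by auto
  qed
  have S0n: "S0 \<subseteq> {1..n}" using assms(1) S0(1) by blast
  have hS0: "h S0 \<subseteq> S0" using assms(3) S0(1) .
  have adjI: "adj h S0 T" if "T \<in> F" "T \<noteq> S0" "X \<in> Q n S0 (h S0)" "X \<in> Q n T (h T)" for T X
  proof -
    have "X \<inter> S0 = h S0" using Q_inter[OF hS0 that(3)] .
    moreover have "X \<inter> T = h T" using Q_inter[OF assms(3)[OF that(1)] that(4)] .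
    ultimately show ?thesis unfolding adj_def using that(2) by blast
  qed
  show ?thesis
  proof (rule bexI[OF _ S0(1)], rule notI)
    assume cov: "Q n S0 (h S0) \<subseteq> (\<Union>S\<in>F - {S0}. Q n S (h S))"
    define X1 where "X1 = h S0"
    define X2 where "X2 = h S0 \<union> ({1..n} - S0)"
    have X1: "X1 \<in> Q n S0 (h S0)" unfolding X1_def Q_def by blast
    have X2: "X2 \<in> Q n S0 (h S0)" unfolding X2_def Q_def by blast
    obtain T1 where T1: "T1 \<in> F" "T1 \<noteq> S0" "X1 \<in> Q n T1 (h T1)" using cov X1 by blast
    obtain T2 where T2: "T2 \<in> F" "T2 \<noteq> S0" "X2 \<in> Q n T2 (h T2)" using cov X2 by blast
    have "T1 = T2" using uniq[OF T1(1) adjI[OF T1(1) T1(2) X1 T1(3)] T2(1) adjI[OF T2(1) T2(2) X2 T2(3)]] .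
    have e1: "X1 \<inter> T1 = h T1" using Q_inter[OF assms(3)[OF T1(1)] T1(3)] .
    have e2: "X2 \<inter> T1 = h T1" using Q_inter[OF assms(3)[OF T2(1)] T2(3)] \<open>T1 = T2\<close> by simp
    have T1n: "T1 \<subseteq> {1..n}" using assms(1) T1(1) by blast
    have "T1 \<subseteq> S0"
    proof
      fix t assume t: "t \<in> T1"
      show "t \<in> S0"
      proof (rule ccontr)
        assume "t \<notin> S0"
        hence "t \<in> X2 \<inter> T1" "t \<notin> X1" using t T1n hS0 unfolding X1_def X2_def by auto
        thus False using e1 e2 by blast
      qed
    qed
    thus False using assms(2) T1 S0(1) unfolding sperner_def by blast
  qed
qed

end
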